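(* Let $\alpha\in\mathbb{R}\setminus\mathbb{Q}$ with continued fraction approximants $\frac{p_m}{q_m}$. There is a subsequence $(\frac{p_{m_l}}{q_{m_l}})_{l}$ such that for every analytic function $f$ on $\mathbb{T}$ with $\int_{\mathbb{T}}f(\theta)\,d\theta=0$, $$\lim_{l\to\infty}\big(f(x)+f(x+\alpha)+\cdots+f(x+(q_{m_l}-1)\alpha)\big)=0$$ uniformly in $x\in\mathbb{T}$.
   Context: $\mathbb{T}=\mathbb{R}/\mathbb{Z}$; "analytic on $\mathbb{T}$" means real analytic, i.e. extending holomorphically to a strip $|\mathrm{Im}\,\theta|\le\delta_0$ for some $\delta_0>0$. The subsequence depends only on $\alpha$, not on $f$. *)

theory Defs
  imports "HOL-Complex_Analysis.Complex_Analysis"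
begin

fun cf_rem :: "real \<Rightarrow> nat \<Rightarrow> real" where
  "cf_rem x 0 = x"
| "cf_rem x (Suc n) = 1 / frac (cf_rem x n)"

definition cf_digit :: "real \<Rightarrow> nat \<Rightarrow> int" where
  "cf_digit x n = \<lfloor>cf_rem x n\<rfloor>"

text \<open>Numerators p_n and denominators q_n of the convergents p_n / q_n
  (standard recurrences with p_(-1) = 1, q_(-1) = 0, p_(-2) = 0, q_(-2) = 1).\<close>
fun cf_p :: "real \<Rightarrow> nat \<Rightarrow> int" where
  "cf_p x 0 = cf_digit x 0"
| "cf_p x (Suc 0) = cf_digit x 1 * cf_digit x 0 + 1"
| "cf_p x (Suc (Suc n)) = cf_digit x (Suc (Suc n)) * cf_p x (Suc n) + cf_p x n"

fun cf_q :: "real \<Rightarrow> nat \<Rightarrow> int" where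
  "cf_q x 0 = 1"
| "cf_q x (Suc 0) = cf_digit x 1"
| "cf_q x (Suc (Suc n)) = cf_digit x (Suc (Suc n)) * cf_q x (Suc n) + cf_q x n"

text \<open>A (complex-valued) real-analytic function on the circle T = R/Z, viewed as a 1-periodic
  function on R that extends holomorphically to a strip |Im z| < delta.\<close>
definition analytic_on_circle :: "(real \<Rightarrow> complex) \<Rightarrow> bool" where
  "analytic_on_circle f \<longleftrightarrow>
     (\<forall>x. f (x + 1) = f x) \<and>
     (\<exists>\<delta>>0. \<exists>F. F holomorphic_on {z. \<bar>Im z\<bar> < \<delta>} \<and> (\<forall>x. F (complex_of_real x) = f x))"

end

theory Submission
  imports Defs
begin


lemma cf_rem_irrat: "x \<notin> \<rat> \<Longrightarrow> cf_rem x n \<notin> \<rat>"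
proof (induction n)
  case 0 then show ?case by simp
next
  case (Suc n)
  have "frac (cf_rem x n) \<notin> \<rat>"
  proof
    assume "frac (cf_rem x n) \<in> \<rat>"
    then have "frac (cf_rem x n) + of_int \<lfloor>cf_rem x n\<rfloor> \<in> \<rat>" by (intro Rats_add) auto
    then show False using Suc by (simp add: frac_def)
  qed
  then have "inverse (frac (cf_rem x n)) \<notin> \<rat>"
    by (metis Rats_inverse inverse_inverse_eq)
  then show ?case by (simp add: divide_inverse)
qed

lemma cf_frac_pos: "x \<notin> \<rat> \<Longrightarrow> frac (cf_rem x n) > 0"
proof -
  assume "x \<notin> \<rat>"
  then have "cf_rem x n \<notin> \<rat>" by (rule cf_rem_irrat)
  then have "cf_rem x n \<notin> \<int>" using Ints_subset_Rats by blast
  then show ?thesis using frac_ge_0 frac_eq_0_iff by (metis order_le_less)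
qed

lemma cf_rem_gt1: "x \<notin> \<rat> \<Longrightarrow> cf_rem x (Suc n) > 1"
  using cf_frac_pos[of x n] frac_lt_1[of "cf_rem x n"] by simp

lemma cf_digit_ge1: "x \<notin> \<rat> \<Longrightarrow> cf_digit x (Suc n) \<ge> 1"
  using cf_rem_gt1[of x n] unfolding cf_digit_def by linarith

lemma cf_rem_step: "x \<notin> \<rat> \<Longrightarrow> cf_rem x n = of_int (cf_digit x n) + 1 / cf_rem x (Suc n)"
  using cf_frac_pos[of x n] by (simp add: cf_digit_def frac_def)

fun pm1 :: "real \<Rightarrow> nat \<Rightarrow> int" where
  "pm1 x 0 = 1" | "pm1 x (Suc n) = cf_p x n"
fun qm1 :: "real \<Rightarrow> nat \<Rightarrow> int" where
  "qm1 x 0 = 0" | "qm1 x (Suc n) = cf_q x n"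

lemma cf_p_Suc: "cf_p x (Suc n) = cf_digit x (Suc n) * cf_p x n + pm1 x n"
  by (cases n) auto
lemma cf_q_Suc: "cf_q x (Suc n) = cf_digit x (Suc n) * cf_q x n + qm1 x n"
  by (cases n) auto

lemma cf_q_pos: "x \<notin> \<rat> \<Longrightarrow> cf_q x n \<ge> 1 \<and> qm1 x n \<ge> 0 \<and> qm1 x n \<le> cf_q x n"
proof (induction n)
  case 0 then show ?case by simp
next
  case (Suc n)
  have a: "cf_digit x (Suc n) \<ge> 1" using cf_digit_ge1 Suc.prems by blast
  have "cf_digit x (Suc n) * cf_q x n \<ge> 1 * cf_q x n" using a Suc.IH Suc.prems by (intro mult_right_mono) auto
  then show ?case using Suc.IH[OF Suc.prems] by (simp only: cf_q_Suc qm1.simps mult_1) linarith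
qed

lemma cf_q_step2: "x \<notin> \<rat> \<Longrightarrow> cf_q x (Suc (Suc n)) \<ge> cf_q x n + 1"
proof -
  assume x: "x \<notin> \<rat>"
  have a: "cf_digit x (Suc (Suc n)) \<ge> 1" using cf_digit_ge1 x by blast
  have "cf_digit x (Suc (Suc n)) * cf_q x (Suc n) \<ge> 1 * cf_q x (Suc n)"
    using a cf_q_pos[OF x, of "Suc n"] by (intro mult_right_mono) auto
  moreover have "cf_q x (Suc n) \<ge> 1" using cf_q_pos[OF x] by blast
  ultimately show ?thesis using cf_q_pos[OF x, of n] by (simp only: cf_q.simps)
qed

lemma cf_q_grow: "x \<notin> \<rat> \<Longrightarrow> 2 * cf_q x n \<ge> int n"
proof (induction n rule: less_induct)
  case (less n)
  show ?case
  proof (cases n)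
    case 0 then show ?thesis by simp
  next
    case (Suc k)
    show ?thesis
    proof (cases k)
      case 0 then show ?thesis using Suc cf_q_pos[OF less.prems, of 1] by simp
    next
      case (Suc j)
      have "int j \<le> 2 * cf_q x j" using less.IH[of j] \<open>n = Suc k\<close> Suc less.prems by simp
      then show ?thesis using \<open>n = Suc k\<close> Suc cf_q_step2[OF less.prems, of j] by simp
    qed
  qed
qed

lemma cf_invariant: "x \<notin> \<rat> \<Longrightarrow>
  x * (cf_q x n * cf_rem x (Suc n) + qm1 x n) = cf_p x n * cf_rem x (Suc n) + pm1 x n
  \<and> cf_p x n * qm1 x n - pm1 x n * cf_q x n = (-1) ^ (Suc n)"
proof (induction n)
  case 0
  have "frac x > 0" using cf_frac_pos[OF 0, of 0] by simp
  then show ?case by (simp add: cf_digit_def frac_def field_simps)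
next
  case (Suc n)
  let ?r = "cf_rem x (Suc n)" and ?r' = "cf_rem x (Suc (Suc n))" and ?a = "cf_digit x (Suc n)"
  have r: "?r = ?a + 1 / ?r'" using cf_rem_step[OF Suc.prems] by blast
  have r'pos: "?r' > 0" using cf_rem_gt1[OF Suc.prems] by (smt (verit))
  have I: "x * (cf_q x n * ?r + qm1 x n) = cf_p x n * ?r + pm1 x n" using Suc by blast
  have "x * (cf_q x n * ?r + qm1 x n) * ?r' = (cf_p x n * ?r + pm1 x n) * ?r'" using I by simp
  then have "x * ((?a * cf_q x n + qm1 x n) * ?r' + cf_q x n) = (?a * cf_p x n + pm1 x n) * ?r' + cf_p x n"
    unfolding r using r'pos by (simp add: field_simps)
  then have 1: "x * (cf_q x (Suc n) * ?r' + qm1 x (Suc n)) = cf_p x (Suc n) * ?r' + pm1 x (Suc n)"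
    by (simp add: cf_p_Suc cf_q_Suc)
  have "cf_p x (Suc n) * qm1 x (Suc n) - pm1 x (Suc n) * cf_q x (Suc n)
      = - (cf_p x n * qm1 x n - pm1 x n * cf_q x n)"
    by (simp add: cf_p_Suc cf_q_Suc algebra_simps)
  then show ?case using 1 Suc by simp
qed

lemma cf_coprime: "x \<notin> \<rat> \<Longrightarrow> coprime (cf_p x n) (cf_q x n)"
proof (rule coprimeI)
  fix d assume x: "x \<notin> \<rat>" and d: "d dvd cf_p x n" "d dvd cf_q x n"
  have "d dvd cf_p x n * qm1 x n - pm1 x n * cf_q x n" using d by simp
  then have "d dvd (-1) ^ Suc n" using cf_invariant[OF x, of n] by simp
  then have "d dvd (-1) ^ Suc n * (-1) ^ Suc n" by (rule dvd_mult2)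
  then have "d dvd 1" by (simp flip: power_add)
  then show "is_unit d" by simp
qed

lemma cf_approx: fixes x :: real shows "x \<notin> \<rat> \<Longrightarrow> \<bar>of_int (cf_q x n) * x - of_int (cf_p x n)\<bar> \<le> 1 / of_int (cf_q x n)"
proof -
  assume x: "x \<notin> \<rat>"
  define q where "q = real_of_int (cf_q x n)"
  define p where "p = real_of_int (cf_p x n)"
  define q' where "q' = real_of_int (qm1 x n)"
  define p' where "p' = real_of_int (pm1 x n)"
  define r where "r = cf_rem x (Suc n)"
  have q: "q \<ge> 1" "q' \<ge> 0" using cf_q_pos[OF x, of n] by (auto simp: q_def q'_def)
  have r: "r > 1" using cf_rem_gt1[OF x] r_def by blast
  have I: "x * (q * r + q') = p * r + p'" and D: "\<bar>p * q' - p' * q\<bar> = 1"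
    using cf_invariant[OF x, of n] unfolding p_def q_def p'_def q'_def r_def
    by (auto simp flip: of_int_mult of_int_diff simp: of_int_eq_iff[symmetric])
  have den: "q * r + q' \<ge> q" using q r by (smt (verit) mult_le_cancel_left1)
  have "(q * x - p) * (q * r + q') = q * (x * (q * r + q')) - p * (q * r + q')"
    by (simp add: algebra_simps)
  also have "\<dots> = q * (p * r + p') - p * (q * r + q')" using I by simp
  also have "\<dots> = -(p * q' - p' * q)" by (simp add: algebra_simps)
  finally have "\<bar>q * x - p\<bar> * (q * r + q') = 1" using D by (metis abs_minus_cancel abs_mult abs_of_nonneg den q(1) order_trans zero_le_one linorder_not_le less_le_not_le)
  then have "\<bar>q * x - p\<bar> = 1 / (q * r + q')" using den q by (simp add: field_simps)
  also have "\<dots> \<le> 1 / q" using den q by (intro divide_left_mono) auto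
  finally show ?thesis by (simp add: q_def p_def)
qed



lemma deriv_bound:
  fixes g :: "real \<Rightarrow> complex"
  assumes d: "\<And>t. (g has_vector_derivative g' t) (at t)"
    and B: "\<And>t. a \<le> t \<Longrightarrow> t \<le> b \<Longrightarrow> norm (g' t) \<le> B" and ab: "a \<le> b"
  shows "norm (g b - g a) \<le> B * (b - a)"
proof (cases "a = b")
  case True then show ?thesis by simp
next
  case False
  then have "a < b" using ab by simp
  have c: "continuous_on {a..b} g"
    using d by (meson continuous_at_imp_continuous_on has_vector_derivative_continuous)
  have "norm (g b - g a) \<le> B * b - B * a"
    by (rule differentiable_bound_general[OF \<open>a < b\<close> c, where \<phi> = "\<lambda>t. B * t" and \<phi>' = "\<lambda>_. B" and f' = g'])
       (auto intro!: continuous_intros derivative_eq_intros d B)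
  then show ?thesis by (simp add: algebra_simps)
qed

definition ee :: "int \<Rightarrow> real \<Rightarrow> complex" where
  "ee n t = exp (\<i> * complex_of_real (2 * pi * of_int n * t))"

lemma ee_add: "ee n (s + t) = ee n s * ee n t"
  unfolding ee_def by (simp add: algebra_simps exp_add)
lemma ee_addn: "ee (n + m) t = ee n t * ee m t"
  unfolding ee_def by (simp add: algebra_simps exp_add)
lemma ee_0 [simp]: "ee 0 t = 1" unfolding ee_def by simp
lemma ee_at0 [simp]: "ee n 0 = 1" unfolding ee_def by simp
lemma norm_ee [simp]: "norm (ee n t) = 1"
  unfolding ee_def by (simp only: norm_exp_i_times)
lemma cnj_ee: "cnj (ee n t) = ee (- n) t"
  unfolding ee_def by (simp add: exp_cnj)
lemma ee_int: "ee n (of_int k) = 1"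
proof -
  have "ee n (of_int k) = exp (complex_of_real (2 * pi * of_int (n * k)) * \<i>)"
    unfolding ee_def by (simp add: algebra_simps)
  also have "\<dots> = 1" by (rule exp_eq_1[THEN iffD2]) (auto intro!: exI[of _ "n * k"])
  finally show ?thesis .
qed
lemma ee_shift_int: "ee n (t + of_int k) = ee n t"
  by (simp add: ee_add ee_int)
lemma ee_shift1: "ee n (t + 1) = ee n t"
  using ee_shift_int[of n t 1] by simp
lemma ee_pow: "ee n t ^ k = ee n (of_nat k * t)"
  by (induction k) (auto simp: ee_add algebra_simps)
lemma ee_deriv: "(ee n has_vector_derivative (2 * pi * \<i> * of_int n) * ee n t) (at t)"
proof -
  have "((\<lambda>t. exp (\<i> * complex_of_real (2 * pi * of_int n * t))) has_vector_derivative
      exp (\<i> * complex_of_real (2 * pi * of_int n * t)) * (\<i> * (2 * pi * of_int n))) (at t)"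
    by (auto intro!: derivative_eq_intros has_vector_derivative_real_field simp: algebra_simps)
  then show ?thesis unfolding ee_def[abs_def] by (simp add: algebra_simps)
qed
lemma ee_lip: "norm (ee n b - ee n a) \<le> 2 * pi * \<bar>of_int n\<bar> * \<bar>b - a\<bar>"
proof -
  have *: "norm (ee n y - ee n x) \<le> 2 * pi * \<bar>of_int n\<bar> * (y - x)" if "x \<le> y" for x y
    by (rule deriv_bound[OF ee_deriv _ that]) (simp add: norm_mult)
  show ?thesis
  proof (cases "a \<le> b")
    case True then show ?thesis using *[OF True] by simp
  next
    case False then show ?thesis using *[of b a] by (simp add: norm_minus_commute)
  qed
qed
lemma ee_ne1: assumes "\<alpha> \<notin> \<rat>" "n \<noteq> 0" shows "ee n \<alpha> \<noteq> 1"
proof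
  assume "ee n \<alpha> = 1"
  then obtain k :: int where k: "2 * pi * of_int n * \<alpha> = of_int (2 * k) * pi"
    unfolding ee_def by (auto simp: exp_eq_1)
  then have "of_int n * \<alpha> = of_int k" by simp
  then have "\<alpha> = of_int k / of_int n" using assms(2) by (simp add: field_simps)
  then have "\<alpha> \<in> \<rat>" by simp
  then show False using assms(1) by simp
qed

lemma ee_birkhoff:
  fixes \<alpha> x :: real and q :: nat and p :: int
  assumes "\<alpha> \<notin> \<rat>" "n \<noteq> 0"
  shows "norm (\<Sum>k<q. ee n (x + of_nat k * \<alpha>)) \<le>
     (2 * pi * \<bar>of_int n\<bar> / norm (ee n \<alpha> - 1)) * \<bar>of_nat q * \<alpha> - of_int p\<bar>"
proof -
  have ne: "ee n \<alpha> \<noteq> 1" by (rule ee_ne1[OF assms])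
  have "(\<Sum>k<q. ee n (x + of_nat k * \<alpha>)) = ee n x * (\<Sum>k<q. ee n \<alpha> ^ k)"
    by (simp add: ee_add ee_pow sum_distrib_left)
  also have "\<dots> = ee n x * ((ee n \<alpha> ^ q - 1) / (ee n \<alpha> - 1))"
    using ne by (simp add: geometric_sum)
  finally have "norm (\<Sum>k<q. ee n (x + of_nat k * \<alpha>)) = norm (ee n \<alpha> ^ q - 1) / norm (ee n \<alpha> - 1)"
    by (simp add: norm_mult norm_divide)
  also have "ee n \<alpha> ^ q = ee n (of_nat q * \<alpha> - of_int p)"
    using ee_shift_int[of n "of_nat q * \<alpha> - of_int p" p] by (simp add: ee_pow)
  also have "norm (ee n (of_nat q * \<alpha> - of_int p) - 1) \<le> 2 * pi * \<bar>of_int n\<bar> * \<bar>of_nat q * \<alpha> - of_int p\<bar>"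
    using ee_lip[of n "of_nat q * \<alpha> - of_int p" 0] by simp
  finally show ?thesis using ne by (simp add: divide_right_mono field_simps)
qed

definition T :: "(complex \<times> int) list \<Rightarrow> real \<Rightarrow> complex" where
  "T xs t = (\<Sum>p\<leftarrow>xs. fst p * ee (snd p) t)"

lemma T_Nil [simp]: "T [] t = 0" by (simp add: T_def)
lemma T_Cons [simp]: "T (p # xs) t = fst p * ee (snd p) t + T xs t" by (simp add: T_def)
lemma T_append [simp]: "T (xs @ ys) t = T xs t + T ys t" by (simp add: T_def)

definition prodl :: "(complex \<times> int) list \<Rightarrow> (complex \<times> int) list \<Rightarrow> (complex \<times> int) list" where
  "prodl xs ys = concat (map (\<lambda>p. map (\<lambda>q. (fst p * fst q, snd p + snd q)) ys) xs)"
definition cnjl :: "(complex \<times> int) list \<Rightarrow> (complex \<times> int) list" where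
  "cnjl xs = map (\<lambda>p. (cnj (fst p), - snd p)) xs"
definition scl :: "complex \<Rightarrow> (complex \<times> int) list \<Rightarrow> (complex \<times> int) list" where
  "scl c xs = map (\<lambda>p. (c * fst p, snd p)) xs"
definition dl :: "(complex \<times> int) list \<Rightarrow> (complex \<times> int) list" where
  "dl xs = map (\<lambda>p. ((2 * pi * \<i> * of_int (snd p)) * fst p, snd p)) xs"
definition il :: "(complex \<times> int) list \<Rightarrow> (complex \<times> int) list" where
  "il xs = map (\<lambda>p. (fst p / (2 * pi * \<i> * of_int (snd p)), snd p)) xs"

lemma T_scl [simp]: "T (scl c xs) t = c * T xs t"
  by (induction xs) (auto simp: scl_def algebra_simps)
lemma T_cnjl [simp]: "T (cnjl xs) t = cnj (T xs t)"
  by (induction xs) (auto simp: cnjl_def cnj_ee)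
lemma T_map_single: "T (map (\<lambda>q. (c * fst q, n + snd q)) ys) t = c * ee n t * T ys t"
  by (induction ys) (auto simp: algebra_simps ee_addn)
lemma T_prodl [simp]: "T (prodl xs ys) t = T xs t * T ys t"
  by (induction xs) (auto simp: prodl_def T_map_single algebra_simps)
lemma T_deriv: "(T xs has_vector_derivative T (dl xs) t) (at t)"
proof (induction xs)
  case Nil then show ?case by (simp add: dl_def T_def[abs_def])
next
  case (Cons p xs)
  have e: "T (p # xs) = (\<lambda>t. fst p * ee (snd p) t + T xs t)" by auto
  show ?case unfolding e
    using has_vector_derivative_add[OF has_vector_derivative_mult_right[OF ee_deriv[of "snd p" t], of "fst p"] Cons.IH]
    by (simp add: dl_def algebra_simps)
qed
lemma T_dl_il: "\<forall>p\<in>set xs. snd p \<noteq> 0 \<Longrightarrow> T (dl (il xs)) t = T xs t"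
  by (induction xs) (auto simp: dl_def il_def)
lemma T_il_deriv: "\<forall>p\<in>set xs. snd p \<noteq> 0 \<Longrightarrow> (T (il xs) has_vector_derivative T xs t) (at t)"
  using T_deriv[of "il xs" t] T_dl_il[of xs t] by simp
lemma T_shift1: "T xs (t + 1) = T xs t"
  by (induction xs) (auto simp: ee_shift1)
lemma T_const: "T [(c, 0)] t = c" by simp
lemma T_split: "T xs t = T (filter (\<lambda>p. snd p \<noteq> 0) xs) t + (\<Sum>p\<leftarrow>filter (\<lambda>p. snd p = 0) xs. fst p)"
  by (induction xs) auto
lemma il_nz: "\<forall>p\<in>set xs. snd p \<noteq> 0 \<Longrightarrow> \<forall>p\<in>set (il xs). snd p \<noteq> 0"
  by (auto simp: il_def)

lemma T_birkhoff:
  fixes \<alpha> :: real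
  assumes "\<alpha> \<notin> \<rat>" "\<forall>p\<in>set xs. snd p \<noteq> 0"
  shows "\<exists>C\<ge>0. \<forall>(q::nat) (p::int) (x::real). norm (\<Sum>k<q. T xs (x + of_nat k * \<alpha>)) \<le> C * \<bar>of_nat q * \<alpha> - of_int p\<bar>"
  using assms(2)
proof (induction xs)
  case Nil then show ?case by (auto intro!: exI[of _ 0])
next
  case (Cons a xs)
  then obtain C where C: "C \<ge> 0" "\<And>q p x. norm (\<Sum>k<q. T xs (x + of_nat k * \<alpha>)) \<le> C * \<bar>of_nat q * \<alpha> - of_int p\<bar>"
    by auto
  define C1 where "C1 = 2 * pi * \<bar>of_int (snd a)\<bar> / norm (ee (snd a) \<alpha> - 1)"
  have C1: "C1 \<ge> 0" by (simp add: C1_def)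
  show ?case
  proof (intro exI[of _ "norm (fst a) * C1 + C"] conjI allI)
    show "0 \<le> norm (fst a) * C1 + C" using C C1 by simp
    fix q p x
    have "(\<Sum>k<q. T (a # xs) (x + of_nat k * \<alpha>)) = fst a * (\<Sum>k<q. ee (snd a) (x + of_nat k * \<alpha>)) + (\<Sum>k<q. T xs (x + of_nat k * \<alpha>))"
      by (simp add: sum.distrib sum_distrib_left)
    note eq = this
    have h1: "norm (\<Sum>k<q. ee (snd a) (x + of_nat k * \<alpha>)) \<le> C1 * \<bar>of_nat q * \<alpha> - of_int p\<bar>"
      using ee_birkhoff[OF assms(1), where n="snd a" and q=q and x=x and p=p] Cons.prems by (simp add: C1_def)
    have "norm (fst a * (\<Sum>k<q. ee (snd a) (x + of_nat k * \<alpha>))) \<le> norm (fst a) * (C1 * \<bar>of_nat q * \<alpha> - of_int p\<bar>)"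
      unfolding norm_mult by (rule mult_left_mono[OF h1]) simp
    then have bd: "norm (fst a * (\<Sum>k<q. ee (snd a) (x + of_nat k * \<alpha>)) + (\<Sum>k<q. T xs (x + of_nat k * \<alpha>))) \<le> norm (fst a) * (C1 * \<bar>of_nat q * \<alpha> - of_int p\<bar>) + C * \<bar>of_nat q * \<alpha> - of_int p\<bar>"
      using C(2)[where q=q and p=p and x=x] by (intro order_trans[OF norm_triangle_ineq] add_mono)
    show "norm (\<Sum>k<q. T (a # xs) (x + of_nat k * \<alpha>)) \<le> (norm (fst a) * C1 + C) * \<bar>of_nat q * \<alpha> - of_int p\<bar>"
      unfolding eq using bd by (simp add: algebra_simps)
  qed
qed



lemma periodic_int:
  fixes \<phi> :: "real \<Rightarrow> 'a"
  assumes p: "\<And>t. \<phi> (t + 1) = \<phi> t"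
  shows "\<phi> (t + of_int k) = \<phi> t"
proof -
  have nat: "\<phi> (s + of_nat n) = \<phi> s" for s n
    by (induction n) (auto simp: p[of "s + of_nat _", symmetric] algebra_simps)
  show ?thesis
  proof (cases "k \<ge> 0")
    case True then show ?thesis using nat[of t "nat k"] by simp
  next
    case False
    then have "\<phi> (t + of_int k + of_nat (nat (- k))) = \<phi> (t + of_int k)" by (rule_tac nat)
    then show ?thesis using False by simp
  qed
qed

lemma exp_i_eq_periodic:
  fixes \<phi> :: "real \<Rightarrow> 'a"
  assumes p: "\<And>t. \<phi> (t + 1) = \<phi> t" and e: "exp (\<i> * complex_of_real a) = exp (\<i> * complex_of_real b)"
  shows "\<phi> (a / (2 * pi)) = \<phi> (b / (2 * pi))"
proof -
  obtain n :: int where "\<i> * complex_of_real a = \<i> * complex_of_real b + (of_int (2 * n) * pi) * \<i>"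
    using e exp_eq by blast
  then have "Im (\<i> * complex_of_real a) = Im (\<i> * complex_of_real b + (of_int (2 * n) * pi) * \<i>)" by simp
  then have "a = b + 2 * pi * of_int n" by simp
  then have "a / (2 * pi) = b / (2 * pi) + of_int n" by (simp add: field_simps)
  then show ?thesis using periodic_int[where \<phi>=\<phi>, OF p] by simp
qed

lemma norm1_exp_Arg: "norm z = 1 \<Longrightarrow> z = exp (\<i> * complex_of_real (Arg z))"
  using Arg_eq[of z] by (cases "z = 0") auto

lemma circ_lift:
  fixes \<phi> :: "real \<Rightarrow> real"
  assumes c: "continuous_on UNIV \<phi>" and p: "\<And>t. \<phi> (t + 1) = \<phi> t"
  shows "continuous_on (sphere 0 1) (\<lambda>z. \<phi> (Arg z / (2 * pi)))"
    and "\<phi> (Arg (ee 1 t) / (2 * pi)) = \<phi> t"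
proof -
  have cp: "isCont \<phi> y" for y using c by (simp add: continuous_on_eq_continuous_at)
  show "\<phi> (Arg (ee 1 t) / (2 * pi)) = \<phi> t"
  proof -
    have "exp (\<i> * complex_of_real (Arg (ee 1 t))) = exp (\<i> * complex_of_real (2 * pi * t))"
      using norm1_exp_Arg[of "ee 1 t"] by (simp add: ee_def)
    from exp_i_eq_periodic[where \<phi>=\<phi>, OF p this] show ?thesis by simp
  qed
  have alt: "\<phi> (Arg z / (2 * pi)) = \<phi> ((Arg (- z) + pi) / (2 * pi))" if "z \<noteq> 0" for z
  proof -
    have "exp (\<i> * complex_of_real (Arg z)) = sgn z" using Arg_eq[of z] that
      by (metis cis_Arg cis_conv_exp mult.commute)
    also have "sgn z = - sgn (- z)" by (simp add: sgn_minus)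
    also have "sgn (- z) = exp (\<i> * complex_of_real (Arg (- z)))" using that
      by (metis cis_Arg cis_conv_exp mult.commute neg_equal_0_iff_equal)
    finally have "exp (\<i> * complex_of_real (Arg z)) = exp (\<i> * complex_of_real (Arg (- z) + pi))"
      by (simp add: distrib_left exp_add)
    then show ?thesis by (rule exp_i_eq_periodic[where \<phi>=\<phi>, OF p])
  qed
  show "continuous_on (sphere 0 1) (\<lambda>z. \<phi> (Arg z / (2 * pi)))"
    unfolding continuous_on_eq_continuous_within
  proof
    fix z :: complex assume z: "z \<in> sphere 0 1"
    then have z0: "z \<noteq> 0" by auto
    show "continuous (at z within sphere 0 1) (\<lambda>z. \<phi> (Arg z / (2 * pi)))"
    proof (cases "z \<in> \<real>\<^sub>\<le>\<^sub>0")
      case False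
      have "isCont (\<lambda>z. Arg z / (2 * pi)) z"
        using continuous_at_Arg[OF False] by (intro continuous_intros) auto
      then have "isCont (\<lambda>z. \<phi> (Arg z / (2 * pi))) z"
        using continuous_at_compose[OF _ cp, unfolded o_def] by blast
      then show ?thesis by (rule continuous_at_imp_continuous_at_within)
    next
      case True
      then have "- z \<notin> \<real>\<^sub>\<le>\<^sub>0" using z0 by (auto simp: nonpos_Reals_def)
      then have "isCont (\<lambda>z. Arg (- z)) z"
        by (intro continuous_at_compose[OF _ continuous_at_Arg, unfolded o_def]) (auto intro: continuous_intros)
      then have "isCont (\<lambda>z. (Arg (- z) + pi) / (2 * pi)) z"
        by (intro continuous_intros) auto
      then have "isCont (\<lambda>z. \<phi> ((Arg (- z) + pi) / (2 * pi))) z"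
        using continuous_at_compose[OF _ cp, unfolded o_def] by blast
      then have "continuous (at z within sphere 0 1) (\<lambda>z. \<phi> ((Arg (- z) + pi) / (2 * pi)))"
        by (rule continuous_at_imp_continuous_at_within)
      then show ?thesis
        by (rule continuous_transform_within[where \<delta> = 1]) (use z in \<open>auto intro!: alt[symmetric]\<close>)
    qed
  qed
qed

lemma Re_mult_eq: "Re a * Re b = Re ((1/2) * (a * b + a * cnj b))"
  by (simp add: field_simps)

lemma real_trig_approx:
  fixes \<phi> :: "real \<Rightarrow> real"
  assumes c: "continuous_on UNIV \<phi>" and p: "\<And>t. \<phi> (t + 1) = \<phi> t" and e: "e > 0"
  shows "\<exists>xs. \<forall>t. \<bar>\<phi> t - Re (T xs t)\<bar> < e"
proof -
  define S :: "complex set" where "S = sphere 0 1"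
  define P where "P = (\<lambda>u :: complex \<Rightarrow> real. continuous_on S u \<and> (\<exists>xs. \<forall>t. u (ee 1 t) = Re (T xs t)))"
  have "\<exists>g. P g \<and> (\<forall>x\<in>S. \<bar>(\<lambda>z. \<phi> (Arg z / (2 * pi))) x - g x\<bar> < e)"
  proof (rule Stone_Weierstrass_HOL)
    show "compact S" by (simp add: S_def)
    show "P (\<lambda>x. c)" for c
      unfolding P_def by (auto intro!: exI[of _ "[(of_real c, 0)]"])
    show "P f \<Longrightarrow> continuous_on S f" for f by (simp add: P_def)
    show "P (\<lambda>x. f x + g x)" if fg: "P f \<and> P g" for f g
    proof -
      obtain xs where "\<forall>t. f (ee 1 t) = Re (T xs t)" using fg unfolding P_def by auto
      moreover obtain ys where "\<forall>t. g (ee 1 t) = Re (T ys t)" using fg unfolding P_def by auto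
      moreover have "continuous_on S (\<lambda>x. f x + g x)" using fg unfolding P_def by (intro continuous_on_add) auto
      ultimately show ?thesis unfolding P_def
        by (intro conjI exI[of _ "xs @ ys"]) auto
    qed
    show "P (\<lambda>x. f x * g x)" if fg: "P f \<and> P g" for f g
    proof -
      obtain xs where "\<forall>t. f (ee 1 t) = Re (T xs t)" using fg unfolding P_def by auto
      moreover obtain ys where "\<forall>t. g (ee 1 t) = Re (T ys t)" using fg unfolding P_def by auto
      moreover have "continuous_on S (\<lambda>x. f x * g x)" using fg unfolding P_def by (intro continuous_on_mult) auto
      ultimately show ?thesis unfolding P_def
        by (intro conjI exI[of _ "scl (1/2) (prodl xs ys @ prodl xs (cnjl ys))"]) (auto simp: field_simps)
    qed
    show "\<exists>f. P f \<and> f x \<noteq> f y" if "x \<in> S \<and> y \<in> S \<and> x \<noteq> y" for x y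
    proof (cases "Re x = Re y")
      case False
      have "P Re" unfolding P_def
        by (intro conjI exI[of _ "[(1, 1)]"] continuous_on_Re continuous_on_id) auto
      then show ?thesis using False by auto
    next
      case True
      then have "Im x \<noteq> Im y" using that complex_eqI by blast
      have "P Im" unfolding P_def
        by (intro conjI exI[of _ "[(- \<i>, 1)]"] continuous_on_Im continuous_on_id) auto
      then show ?thesis using \<open>Im x \<noteq> Im y\<close> by auto
    qed
    show "continuous_on S (\<lambda>z. \<phi> (Arg z / (2 * pi)))"
      unfolding S_def by (rule circ_lift(1)[OF c p])
  qed (rule e)
  then obtain g where g: "P g" "\<forall>x\<in>S. \<bar>\<phi> (Arg x / (2 * pi)) - g x\<bar> < e" by auto
  then obtain xs where xs: "\<forall>t. g (ee 1 t) = Re (T xs t)" by (auto simp: P_def)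
  have "\<bar>\<phi> t - Re (T xs t)\<bar> < e" for t
  proof -
    have "ee 1 t \<in> S" by (simp add: S_def)
    then show ?thesis using g(2) xs circ_lift(2)[OF c p, of t] by auto
  qed
  then show ?thesis by blast
qed

lemma trig_approx:
  fixes D :: "real \<Rightarrow> complex"
  assumes c: "continuous_on UNIV D" and p: "\<And>t. D (t + 1) = D t" and e: "e > 0"
  shows "\<exists>xs. \<forall>t. norm (D t - T xs t) \<le> e"
proof -
  obtain xs where xs: "\<forall>t. \<bar>Re (D t) - Re (T xs t)\<bar> < e / 2"
    using real_trig_approx[of "\<lambda>t. Re (D t)" "e/2"] continuous_on_Re[OF c] p e by auto
  obtain ys where ys: "\<forall>t. \<bar>Im (D t) - Re (T ys t)\<bar> < e / 2"
    using real_trig_approx[of "\<lambda>t. Im (D t)" "e/2"] continuous_on_Im[OF c] p e by auto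
  define zs where "zs = scl (1/2) (xs @ cnjl xs) @ scl (\<i>/2) (ys @ cnjl ys)"
  have Tzs: "T zs t = complex_of_real (Re (T xs t)) + \<i> * complex_of_real (Re (T ys t))" for t
    by (simp add: zs_def complex_add_cnj field_simps)
  show ?thesis
  proof (intro exI allI)
    fix t
    have "norm (D t - T zs t) \<le> \<bar>Re (D t - T zs t)\<bar> + \<bar>Im (D t - T zs t)\<bar>" by (rule cmod_le)
    also have "\<dots> \<le> e / 2 + e / 2" using xs ys by (intro add_mono) (auto simp: Tzs less_imp_le)
    finally show "norm (D t - T zs t) \<le> e" by simp
  qed
qed



lemma shift_deriv:
  fixes f :: "real \<Rightarrow> complex"
  assumes "(f has_vector_derivative D) (at (t + c))"
  shows "((\<lambda>t. f (t + c)) has_vector_derivative D) (at t)"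
proof -
  have "((\<lambda>t. t + c) has_vector_derivative 1) (at t)"
    by (auto intro!: derivative_eq_intros)
  from vector_diff_chain_at[OF this assms] show ?thesis by (simp add: o_def)
qed

lemma analytic_facts:
  fixes f :: "real \<Rightarrow> complex"
  assumes "analytic_on_circle f" "integral {0..1} f = 0"
  obtains D G where "\<And>t. (f has_vector_derivative D t) (at t)" "continuous_on UNIV D"
    "\<And>t. D (t + 1) = D t" "\<And>t. (G has_vector_derivative f t) (at t)" "\<And>t. G (t + 1) = G t"
    "\<And>t. f (t + 1) = f t"
proof -
  obtain \<delta> F where \<delta>: "\<delta> > 0" and hol: "F holomorphic_on {z. \<bar>Im z\<bar> < \<delta>}"
    and Ff: "\<And>x. F (complex_of_real x) = f x" and fp: "\<And>x. f (x + 1) = f x"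
    using assms(1) unfolding analytic_on_circle_def by blast
  define U where "U = {z. \<bar>Im z\<bar> < \<delta>}"
  have U: "U = {z. Im z < \<delta>} \<inter> {z. Im z > - \<delta>}" unfolding U_def by auto
  have oU: "open U" unfolding U by (intro open_Int open_halfspace_Im_lt open_halfspace_Im_gt)
  have cU: "convex U" unfolding U by (intro convex_Int convex_halfspace_Im_lt convex_halfspace_Im_gt)
  have inU: "complex_of_real x \<in> U" for x using \<delta> by (simp add: U_def)
  have hol: "F holomorphic_on U" using hol by (simp add: U_def)
  have fe: "f = (\<lambda>x. F (complex_of_real x))" using Ff by auto
  define D where "D t = deriv F (complex_of_real t)" for t
  have Fd: "(F has_field_derivative deriv F z) (at z)" if "z \<in> U" for z
    using hol oU that by (simp add: holomorphic_derivI)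
  have fd: "(f has_vector_derivative D t) (at t)" for t
    unfolding fe D_def by (rule has_vector_derivative_real_field[OF Fd[OF inU]])
  have "continuous_on U (deriv F)"
    using holomorphic_deriv[OF hol oU] by (rule holomorphic_on_imp_continuous_on)
  then have Dc: "continuous_on UNIV D"
    unfolding D_def by (rule continuous_on_compose2) (auto intro: continuous_intros inU)
  have Dp: "D (t + 1) = D t" for t
  proof -
    have "((\<lambda>t. f (t + 1)) has_vector_derivative D (t + 1)) (at t)" by (rule shift_deriv[OF fd])
    then have "(f has_vector_derivative D (t + 1)) (at t)" by (simp add: fp)
    then show ?thesis using fd vector_derivative_unique_at by blast
  qed
  obtain \<Phi> where \<Phi>: "\<And>z. z \<in> U \<Longrightarrow> (\<Phi> has_field_derivative F z) (at z within U)"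
    by (metis holomorphic_convex_primitive'[OF cU oU hol])
  define G where "G t = \<Phi> (complex_of_real t)" for t
  have Gd: "(G has_vector_derivative f t) (at t)" for t
  proof -
    have "(\<Phi> has_field_derivative F (complex_of_real t)) (at (complex_of_real t))"
      using \<Phi>[OF inU[of t]] unfolding at_within_open[OF inU oU] .
    from has_vector_derivative_real_field[OF this] show ?thesis by (simp add: G_def[abs_def] Ff)
  qed
  have "(f has_integral (G 1 - G 0)) {0..1}"
    by (rule fundamental_theorem_of_calculus) (simp_all add: has_vector_derivative_at_within[OF Gd])
  then have G10: "G 1 = G 0" using assms(2) by (simp add: integral_unique)
  have z: "((\<lambda>t. G (t + 1) - G t) has_vector_derivative 0) (at t within UNIV)" for t
    using has_vector_derivative_diff[OF shift_deriv[where c=1, OF Gd] Gd[of t]] by (simp add: fp)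
  obtain c where c: "\<And>t. t \<in> UNIV \<Longrightarrow> G (t + 1) - G t = c"
    by (rule has_vector_derivative_zero_constant[of UNIV "\<lambda>t. G (t + 1) - G t"]) (auto intro: z)
  have Gp: "G (t + 1) = G t" for t
  proof -
    have "G (t + 1) - G t = G (0 + 1) - G 0" using c[of t] c[of 0] by simp
    then show ?thesis using G10 by simp
  qed
  show ?thesis by (rule that[OF fd Dc Dp Gd Gp fp])
qed

lemma lip_from_deriv:
  fixes h :: "real \<Rightarrow> complex"
  assumes d: "\<And>t. (h has_vector_derivative h' t) (at t)" and B: "\<And>t. norm (h' t) \<le> B"
  shows "norm (h b - h a) \<le> B * \<bar>b - a\<bar>"
proof (cases "a \<le> b")
  case True then show ?thesis using deriv_bound[OF d B True] by simp
next
  case False then show ?thesis using deriv_bound[OF d B, of b a] by (simp add: norm_minus_commute)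
qed



lemma perm_sum:
  fixes g :: "real \<Rightarrow> complex"
  assumes gp: "\<And>t. g (t + 1) = g t" and q: "q \<ge> 1" and cop: "coprime p (int q)"
  shows "(\<Sum>k<q. g (real k * of_int p / real q)) = (\<Sum>j<q. g (real j / real q))"
proof -
  define \<sigma> where "\<sigma> k = nat ((int k * p) mod int q)" for k
  have qpos: "int q > 0" using q by simp
  have \<sigma>lt: "\<sigma> k < q" for k using qpos unfolding \<sigma>_def
    by (simp add: nat_less_iff)
  have inj: "inj_on \<sigma> {..<q}"
  proof (rule inj_onI)
    fix k1 k2 assume k: "k1 \<in> {..<q}" "k2 \<in> {..<q}" and e: "\<sigma> k1 = \<sigma> k2"
    have "(int k1 * p) mod int q = (int k2 * p) mod int q"
      using e qpos unfolding \<sigma>_def by (simp add: nat_eq_iff)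
    then have "int q dvd (int k1 - int k2) * p"
      by (simp add: mod_eq_dvd_iff left_diff_distrib)
    then have d: "int q dvd (int k1 - int k2)"
      using cop by (simp add: coprime_commute coprime_dvd_mult_left_iff)
    show "k1 = k2"
    proof (rule ccontr)
      assume "k1 \<noteq> k2"
      then have "\<bar>int q\<bar> \<le> \<bar>int k1 - int k2\<bar>" using dvd_imp_le_int[OF _ d] by simp
      then show False using k by simp
    qed
  qed
  have img: "\<sigma> ` {..<q} = {..<q}"
    by (rule card_subset_eq) (use \<sigma>lt inj in \<open>auto simp: card_image\<close>)
  have bij: "bij_betw \<sigma> {..<q} {..<q}" using inj img by (simp add: bij_betw_def)
  have eq: "g (real k * of_int p / real q) = g (real (\<sigma> k) / real q)" for k
  proof -
    have "int k * p = int q * ((int k * p) div int q) + (int k * p) mod int q" by simp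
    then have "real k * of_int p = real q * of_int ((int k * p) div int q) + of_int ((int k * p) mod int q)"
      by (metis of_int_add of_int_mult of_int_of_nat_eq)
    moreover have "real (\<sigma> k) = of_int ((int k * p) mod int q)"
      using qpos unfolding \<sigma>_def by simp
    ultimately have "real k * of_int p / real q = real (\<sigma> k) / real q + of_int ((int k * p) div int q)"
      using q by (simp add: field_simps)
    then show ?thesis using periodic_int[where \<phi>=g, OF gp] by simp
  qed
  have "(\<Sum>k<q. g (real k * of_int p / real q)) = (\<Sum>k<q. g (real (\<sigma> k) / real q))"
    by (simp add: eq)
  also have "\<dots> = (\<Sum>j<q. g (real j / real q))"
    by (rule sum.reindex_bij_betw[OF bij, where g = "\<lambda>j. g (real j / real q)"])
  finally show ?thesis .
qed

lemma riemann_bound: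
  fixes h H :: "real \<Rightarrow> complex"
  assumes hH: "\<And>t. (H has_vector_derivative h t) (at t)"
    and Hp: "\<And>t. H (t + 1) = H t"
    and lip: "\<And>a b. norm (h b - h a) \<le> L * \<bar>b - a\<bar>"
    and q: "q \<ge> 1"
  shows "norm (\<Sum>j<q. h (x + real j / real q)) \<le> L"
proof -
  have qp: "real q > 0" using q by simp
  have L0: "L \<ge> 0" using order_trans[OF norm_ge_zero lip[of 0 1]] by simp
  define a where "a j = x + real j / real q" for j
  have step: "norm (h (a j) - real q * (H (a (Suc j)) - H (a j))) \<le> L / real q" for j
  proof -
    define K where "K t = H t - h (a j) * complex_of_real t" for t
    have Kd: "(K has_vector_derivative (h t - h (a j))) (at t)" for t
      unfolding K_def[abs_def]
      by (rule derivative_eq_intros hH | simp)+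
    have B: "norm (h t - h (a j)) \<le> L / real q" if "a j \<le> t" "t \<le> a j + 1 / real q" for t
    proof -
      have "norm (h t - h (a j)) \<le> L * \<bar>t - a j\<bar>" by (rule lip)
      also have "\<dots> \<le> L * (1 / real q)"
        using that L0 by (intro mult_left_mono) auto
      finally show ?thesis by simp
    qed
    have "norm (K (a j + 1 / real q) - K (a j)) \<le> L / real q * (a j + 1 / real q - a j)"
      by (rule deriv_bound[OF Kd B]) (use qp in auto)
    then have "norm (K (a j + 1 / real q) - K (a j)) \<le> L / real q * (1 / real q)" by simp
    moreover have "K (a j + 1 / real q) - K (a j) = H (a (Suc j)) - H (a j) - h (a j) / real q"
      unfolding K_def a_def using qp by (simp add: field_simps)
    ultimately have N: "norm (H (a (Suc j)) - H (a j) - h (a j) / real q) \<le> L / real q * (1 / real q)" by simp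
    have e: "h (a j) - real q * (H (a (Suc j)) - H (a j)) = - (real q * (H (a (Suc j)) - H (a j) - h (a j) / real q))"
      using qp by (simp add: field_simps)
    have "norm (h (a j) - real q * (H (a (Suc j)) - H (a j))) = real q * norm (H (a (Suc j)) - H (a j) - h (a j) / real q)"
      unfolding e norm_minus_cancel norm_mult by simp
    also have "\<dots> \<le> real q * (L / real q * (1 / real q))" by (rule mult_left_mono[OF N]) simp
    also have "\<dots> = L / real q" using qp by simp
    finally show ?thesis .
  qed
  have tel: "(\<Sum>j<q. real q * (H (a (Suc j)) - H (a j))) = 0"
  proof -
    have "(\<Sum>j<q. real q * (H (a (Suc j)) - H (a j))) = real q * (H (a q) - H (a 0))"
      using sum_lessThan_telescope[of "\<lambda>j. H (a j)" q] by (simp add: sum_distrib_left[symmetric])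
    also have "a q = a 0 + 1" unfolding a_def using qp by simp
    finally show ?thesis by (simp add: Hp)
  qed
  have "(\<Sum>j<q. h (x + real j / real q)) = (\<Sum>j<q. h (a j) - real q * (H (a (Suc j)) - H (a j)))"
    using tel by (simp add: sum_subtractf a_def)
  also have "norm \<dots> \<le> (\<Sum>j<q. L / real q)"
    by (rule order_trans[OF norm_sum sum_mono[OF step]])
  also have "\<dots> = L" using qp by simp
  finally show ?thesis .
qed

lemma DK:
  fixes h H :: "real \<Rightarrow> complex" and \<alpha> x L :: real and q :: nat and p :: int
  assumes hH: "\<And>t. (H has_vector_derivative h t) (at t)"
    and Hp: "\<And>t. H (t + 1) = H t" and hp: "\<And>t. h (t + 1) = h t"
    and lip: "\<And>a b. norm (h b - h a) \<le> L * \<bar>b - a\<bar>"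
    and q: "q \<ge> 1" and cop: "coprime p (int q)" and ap: "\<bar>real q * \<alpha> - of_int p\<bar> \<le> 1 / real q"
  shows "norm (\<Sum>k<q. h (x + real k * \<alpha>)) \<le> 2 * L"
proof -
  have qp: "real q > 0" using q by simp
  have L0: "L \<ge> 0" using order_trans[OF norm_ge_zero lip[of 0 1]] by simp
  have d: "norm (h (x + real k * \<alpha>) - h (x + real k * of_int p / real q)) \<le> L / real q" if "k < q" for k
  proof -
    have "(x + real k * \<alpha>) - (x + real k * of_int p / real q) = (real k / real q) * (real q * \<alpha> - of_int p)"
      using qp by (simp add: field_simps)
    then have "\<bar>(x + real k * \<alpha>) - (x + real k * of_int p / real q)\<bar> = (real k / real q) * \<bar>real q * \<alpha> - of_int p\<bar>"
      by (simp add: abs_mult)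
    also have "\<dots> \<le> 1 * (1 / real q)"
      using that qp ap by (intro mult_mono) (auto simp: field_simps)
    finally have "\<bar>(x + real k * \<alpha>) - (x + real k * of_int p / real q)\<bar> \<le> 1 / real q" by simp
    then have "L * \<bar>(x + real k * \<alpha>) - (x + real k * of_int p / real q)\<bar> \<le> L * (1 / real q)"
      using L0 by (rule mult_left_mono)
    then have "L * \<bar>(x + real k * \<alpha>) - (x + real k * of_int p / real q)\<bar> \<le> L / real q" by simp
    then show ?thesis by (rule order_trans[OF lip[where a = "x + real k * of_int p / real q" and b = "x + real k * \<alpha>"]])
  qed
  have A: "norm ((\<Sum>k<q. h (x + real k * \<alpha>)) - (\<Sum>k<q. h (x + real k * of_int p / real q))) \<le> L"
  proof -
    have "norm ((\<Sum>k<q. h (x + real k * \<alpha>)) - (\<Sum>k<q. h (x + real k * of_int p / real q)))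
        \<le> (\<Sum>k<q. L / real q)"
      unfolding sum_subtractf[symmetric] by (rule order_trans[OF norm_sum sum_mono]) (use d in auto)
    also have "\<dots> = L" using qp by simp
    finally show ?thesis .
  qed
  have B: "(\<Sum>k<q. h (x + real k * of_int p / real q)) = (\<Sum>j<q. h (x + real j / real q))"
    using perm_sum[where g = "\<lambda>t. h (x + t)", OF _ q cop] hp by (simp add: add.assoc[symmetric])
  have C: "norm (\<Sum>j<q. h (x + real j / real q)) \<le> L"
    by (rule riemann_bound[OF hH Hp lip q])
  have "norm (\<Sum>k<q. h (x + real k * \<alpha>)) \<le> norm ((\<Sum>k<q. h (x + real k * \<alpha>)) - (\<Sum>k<q. h (x + real k * of_int p / real q))) + norm (\<Sum>k<q. h (x + real k * of_int p / real q))"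
    using norm_triangle_ineq[of "(\<Sum>k<q. h (x + real k * \<alpha>)) - (\<Sum>k<q. h (x + real k * of_int p / real q))" "\<Sum>k<q. h (x + real k * of_int p / real q)"] by simp
  also have "\<dots> \<le> L + L" using A B C by simp
  finally show ?thesis by simp
qed



lemma main_f:
  fixes \<alpha> :: real and f :: "real \<Rightarrow> complex"
  assumes irr: "\<alpha> \<notin> \<rat>" and an: "analytic_on_circle f" and int0: "integral {0..1} f = 0"
  shows "uniform_limit UNIV (\<lambda>l x. \<Sum>k<nat (cf_q \<alpha> l). f (x + real k * \<alpha>)) (\<lambda>x. 0) sequentially"
proof -
  obtain D G where fd: "\<And>t. (f has_vector_derivative D t) (at t)" and Dc: "continuous_on UNIV D"
    and Dp: "\<And>t. D (t + 1) = D t" and Gd: "\<And>t. (G has_vector_derivative f t) (at t)"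
    and Gp: "\<And>t. G (t + 1) = G t" and fp: "\<And>t. f (t + 1) = f t"
    using analytic_facts[OF an int0] by blast
  show ?thesis unfolding uniform_limit_iff dist_norm
  proof (intro allI impI)
    fix e :: real assume e: "e > 0"
    define \<epsilon> where "\<epsilon> = e / 10"
    have \<epsilon>: "\<epsilon> > 0" using e by (simp add: \<epsilon>_def)
    obtain xs where xs: "\<And>t. norm (D t - T xs t) \<le> \<epsilon>" using trig_approx[OF Dc Dp \<epsilon>] by blast
    define xs0 where "xs0 = filter (\<lambda>p. snd p \<noteq> 0) xs"
    define m0 where "m0 = (\<Sum>p\<leftarrow>filter (\<lambda>p. snd p = 0) xs. fst p)"
    have Tsplit: "T xs t = T xs0 t + m0" for t unfolding xs0_def m0_def by (rule T_split)
    have nz0: "\<forall>p\<in>set xs0. snd p \<noteq> 0" by (simp add: xs0_def)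
    define ys where "ys = il xs0"
    define zs where "zs = il ys"
    have nzy: "\<forall>p\<in>set ys. snd p \<noteq> 0" unfolding ys_def by (rule il_nz[OF nz0])
    define h where "h t = f t - T ys t" for t
    define H where "H t = G t - T zs t" for t
    have hd: "(h has_vector_derivative (D t - T xs0 t)) (at t)" for t
      unfolding h_def[abs_def] ys_def by (rule has_vector_derivative_diff[OF fd T_il_deriv[OF nz0]])
    have Hd: "(H has_vector_derivative h t) (at t)" for t
      unfolding H_def[abs_def] h_def zs_def by (rule has_vector_derivative_diff[OF Gd T_il_deriv[OF nzy]])
    have hp: "h (t + 1) = h t" for t by (simp add: h_def fp T_shift1)
    have Hp: "H (t + 1) = H t" for t by (simp add: H_def Gp T_shift1)
    have m0: "norm m0 \<le> \<epsilon>"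
    proof -
      define k where "k t = h t - m0 * complex_of_real t" for t
      have kd: "(k has_vector_derivative (D t - T xs t)) (at t)" for t
      proof -
        have "(k has_vector_derivative (D t - T xs0 t - m0)) (at t)"
          unfolding k_def[abs_def] by (rule derivative_eq_intros hd | simp)+
        then show ?thesis by (simp add: Tsplit algebra_simps)
      qed
      have "norm (k 1 - k 0) \<le> \<epsilon> * (1 - 0)"
        by (rule deriv_bound[OF kd]) (use xs in auto)
      moreover have "k 1 - k 0 = - m0" using hp[of 0] by (simp add: k_def)
      ultimately show ?thesis by simp
    qed
    have hB: "norm (D t - T xs0 t) \<le> 2 * \<epsilon>" for t
    proof -
      have "D t - T xs0 t = (D t - T xs t) + m0" by (simp add: Tsplit)
      also have "norm \<dots> \<le> \<epsilon> + \<epsilon>" by (rule order_trans[OF norm_triangle_ineq add_mono[OF xs m0]])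
      finally show ?thesis by simp
    qed
    have lip: "norm (h b - h a) \<le> (2 * \<epsilon>) * \<bar>b - a\<bar>" for a b
      by (rule lip_from_deriv[OF hd hB])
    obtain C where C0: "C \<ge> 0" and C: "\<And>(q::nat) (p::int) (x::real). norm (\<Sum>k<q. T ys (x + of_nat k * \<alpha>)) \<le> C * \<bar>of_nat q * \<alpha> - of_int p\<bar>"
      using T_birkhoff[OF irr nzy] by blast
    define N where "N = nat \<lceil>4 * C / e\<rceil> + 1"
    show "\<forall>\<^sub>F l in sequentially. \<forall>x\<in>UNIV. norm ((\<Sum>k<nat (cf_q \<alpha> l). f (x + real k * \<alpha>)) - 0) < e"
    proof (rule eventually_sequentiallyI[of N], intro ballI)
      fix l x assume l: "N \<le> l"
      define qi where "qi = cf_q \<alpha> l"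
      define p where "p = cf_p \<alpha> l"
      define q where "q = nat qi"
      have qi1: "qi \<ge> 1" using cf_q_pos[OF irr, of l] by (simp add: qi_def)
      have qq: "real q = of_int qi" using qi1 by (simp add: q_def)
      have q1: "q \<ge> 1" using qi1 by (simp add: q_def)
      have qpos: "real q > 0" using q1 by simp
      have cop: "coprime p (int q)" using cf_coprime[OF irr, of l] qi1 by (simp add: p_def q_def qi_def)
      have ap: "\<bar>real q * \<alpha> - of_int p\<bar> \<le> 1 / real q"
        using cf_approx[OF irr, of l] by (simp add: qq p_def qi_def)
      have DKb: "norm (\<Sum>k<q. h (x + real k * \<alpha>)) \<le> 2 * (2 * \<epsilon>)"
        by (rule DK[OF Hd Hp hp lip q1 cop ap])
      have Bb: "norm (\<Sum>k<q. T ys (x + real k * \<alpha>)) \<le> C * (1 / real q)"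
        using order_trans[OF C[where q=q and p=p and x=x] mult_left_mono[OF ap C0]] by simp
      have "real l \<ge> 4 * C / e + 1"
        using l unfolding N_def by (smt (verit) of_nat_1 of_nat_add of_nat_le_iff of_nat_nat real_nat_ceiling_ge ceiling_le_zero)
      moreover have "2 * real q \<ge> real l" using cf_q_grow[OF irr, of l] qq qi_def by (simp add: of_int_le_iff[symmetric])
      moreover have "4 * C / e = 2 * (2 * C / e)" by simp
      ultimately have "real q > 2 * C / e" by linarith
      then have "C < e / 2 * real q" using e by (simp add: field_simps)
      then have Cq: "C * (1 / real q) < e / 2" using qpos by (simp add: field_simps)
      have "(\<Sum>k<q. f (x + real k * \<alpha>)) = (\<Sum>k<q. h (x + real k * \<alpha>)) + (\<Sum>k<q. T ys (x + real k * \<alpha>))"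
        by (simp add: h_def sum.distrib[symmetric])
      then have "norm (\<Sum>k<q. f (x + real k * \<alpha>)) \<le> 2 * (2 * \<epsilon>) + C * (1 / real q)"
        using norm_triangle_ineq DKb Bb by (smt (verit))
      also have "\<dots> < e" using Cq e unfolding \<epsilon>_def by linarith
      finally show "norm ((\<Sum>k<nat (cf_q \<alpha> l). f (x + real k * \<alpha>)) - 0) < e"
        by (simp add: q_def qi_def)
    qed
  qed
qed

theorem mainTheorem3:
  fixes \<alpha> :: real
  assumes "\<alpha> \<notin> \<rat>"
  shows "\<exists>m :: nat \<Rightarrow> nat. strict_mono m \<and>
    (\<forall>f :: real \<Rightarrow> complex. analytic_on_circle f \<and> integral {0..1} f = 0 \<longrightarrow>
       uniform_limit UNIV
         (\<lambda>l x. \<Sum>k<nat (cf_q \<alpha> (m l)). f (x + real k * \<alpha>))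
         (\<lambda>x. 0) sequentially)"
proof (intro exI[of _ "\<lambda>l. l"] conjI allI impI)
  show "strict_mono (\<lambda>l::nat. l)" by (simp add: strict_mono_def)
  fix f :: "real \<Rightarrow> complex" assume "analytic_on_circle f \<and> integral {0..1} f = 0"
  then show "uniform_limit UNIV (\<lambda>l x. \<Sum>k<nat (cf_q \<alpha> l). f (x + real k * \<alpha>)) (\<lambda>x. 0) sequentially"
    using main_f[OF assms] by blast
qed

end
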